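(* Let $m\ge 1$ and let $\{S_n\}$ be a $G(m,\mathbf{p})$ game, i.e. a $\bmod m$ random walk with parameters $p_0,\dots,p_{m-1}\in(0,1)$ and $q_j=1-p_j$. Let $\mathbb{C}$ be the $m\times m$ transition matrix of the walk's congruence classes modulo $m$, and for $i=1,\dots,m$ let $\gamma_{im}$ be the $(i,i)$-th cofactor of $\mathbb{I}-\mathbb{C}$, with $\gamma_{\cdot m}=\gamma_{1m}+\cdots+\gamma_{mm}$. Then, with probability one, \[ \lim_{n\to\infty}\frac{S_n}{n}=\frac{1}{\gamma_{\cdot m}}\sum_{i=1}^m\gamma_{im}\,(p_{i-1}-q_{i-1}). \]
   Context: A $\bmod m$ random walk $G(m,\mathbf{p})$ is a Markov chain on $\mathbb{Z}$ with $S_{n+1}-S_n\in\{-1,+1\}$, $P(S_{n+1}-S_n=1\mid S_n=j)=p_j$, $P(S_{n+1}-S_n=-1\mid S_n=j)=q_j=1-p_j$, where $p_j=p_{j+m}$ for all $j\in\mathbb{Z}$. The matrix $\mathbb{C}$ has rows and columns indexed by $1,\dots,m$, index $i$ corresponding to the residue class $i-1 \bmod m$, and $\mathbb{C}_{ij}=P(S_{n+1}\equiv j-1 \pmod m\mid S_n\equiv i-1\pmod m)$; for $m\ge3$ its only nonzero entries are $\mathbb{C}_{i,i+1}=p_{i-1}$ and $\mathbb{C}_{i,i-1}=q_{i-1}$ (indices taken cyclically mod $m$). The $(i,i)$ cofactor is the determinant of $\mathbb{I}-\mathbb{C}$ with row $i$ and column $i$ deleted (equal to $1$ when $m=1$).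 *)

theory Defs
  imports "HOL-Probability.Probability" "Jordan_Normal_Form.Determinant"
begin

text \<open>Transition matrix C of the residue classes mod m, 0-indexed:
  row/column index i (0 \<le> i < m) corresponds to the residue class i mod m
  (the paper's index i+1).  Entry (i,j) is P(S_{n+1} = j mod m | S_n = i mod m),
  i.e. p_i if j = i+1 mod m plus q_i = 1 - p_i if j = i-1 mod m
  (for m = 1 and m = 2 the two contributions add up).\<close>
definition modm_matrix :: "nat \<Rightarrow> (nat \<Rightarrow> real) \<Rightarrow> real mat" where
  "modm_matrix m p = mat m m (\<lambda>(i, j).
      (if j = (i + 1) mod m then p i else 0) +
      (if j = (i + m - 1) mod m then 1 - p i else 0))"

text \<open>gamma_{(i+1) m}: the (i,i) cofactor of I - C (0-indexed i); equals 1 when m = 1.\<close>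
definition gamma :: "nat \<Rightarrow> (nat \<Rightarrow> real) \<Rightarrow> nat \<Rightarrow> real" where
  "gamma m p i = cofactor (1\<^sub>m m - modm_matrix m p) i i"

text \<open>S is a mod m random walk G(m,p) on the probability space M: a Markov chain on
  the integers with steps +1 / -1, where from state s the step +1 has probability
  p_(s mod m) and the step -1 has probability q_(s mod m) = 1 - p_(s mod m)
  (conditioned on the whole past; stated multiplicatively, so null conditioning
  events impose nothing).  The initial distribution is arbitrary.\<close>
definition mod_walk :: "'a measure \<Rightarrow> nat \<Rightarrow> (nat \<Rightarrow> real) \<Rightarrow> (nat \<Rightarrow> 'a \<Rightarrow> int) \<Rightarrow> bool" where
  "mod_walk M m p S \<longleftrightarrow>
     prob_space M \<and>
     (\<forall>n. S n \<in> measurable M (count_space UNIV)) \<and>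
     (\<forall>n. AE \<omega> in M. S (Suc n) \<omega> - S n \<omega> \<in> {-1, 1}) \<and>
     (\<forall>n (s :: nat \<Rightarrow> int).
        measure M {\<omega> \<in> space M. (\<forall>k\<le>n. S k \<omega> = s k) \<and> S (Suc n) \<omega> = s n + 1}
          = p (nat (s n mod int m)) * measure M {\<omega> \<in> space M. \<forall>k\<le>n. S k \<omega> = s k} \<and>
        measure M {\<omega> \<in> space M. (\<forall>k\<le>n. S k \<omega> = s k) \<and> S (Suc n) \<omega> = s n - 1}
          = (1 - p (nat (s n mod int m))) * measure M {\<omega> \<in> space M. \<forall>k\<le>n. S k \<omega> = s k})"

end

theory Submission
  imports Defs
begin

definition Cm :: "nat \<Rightarrow> (nat \<Rightarrow> real) \<Rightarrow> nat \<Rightarrow> nat \<Rightarrow> real" where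
  "Cm m p i j = (if j = (i + 1) mod m then p i else 0) + (if j = (i + m - 1) mod m then 1 - p i else 0)"

lemma Amat_carrier: "1\<^sub>m m - modm_matrix m p \<in> carrier_mat m m"
  unfolding modm_matrix_def by auto

lemma Amat_idx: "i < m \<Longrightarrow> j < m \<Longrightarrow>
   (1\<^sub>m m - modm_matrix m p) $$ (i,j) = (if i = j then 1 else 0) - Cm m p i j"
  unfolding modm_matrix_def Cm_def by auto

lemma Cm_sum:
  assumes "1 \<le> m" "i < m"
  shows "(\<Sum>j<m. Cm m p i j * h j) = p i * h ((i+1) mod m) + (1 - p i) * h ((i+m-1) mod m)"
proof -
  have a: "(i+1) mod m < m" "(i+m-1) mod m < m" using assms by auto
  have e: "Cm m p i j * h j = (if j = (i + 1) mod m then p i * h j else 0)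
        + (if j = (i + m - 1) mod m then (1 - p i) * h j else 0)" for j
    unfolding Cm_def by (simp add: distrib_right)
  have "(\<Sum>j<m. Cm m p i j * h j) = (\<Sum>j<m. (if j = (i + 1) mod m then p i * h j else 0))
        + (\<Sum>j<m. (if j = (i + m - 1) mod m then (1 - p i) * h j else 0))"
    unfolding e by (simp add: sum.distrib)
  also have "\<dots> = p i * h ((i+1) mod m) + (1 - p i) * h ((i+m-1) mod m)"
    using a by (simp add: sum.delta')
  finally show ?thesis .
qed

lemma mat_vec_sum: "A \<in> carrier_mat n n \<Longrightarrow> v \<in> carrier_vec n \<Longrightarrow> a < n \<Longrightarrow>
   vec_index (A *\<^sub>v v) a = (\<Sum>b<n. A $$ (a,b) * vec_index v b)"
  by (auto simp: scalar_prod_def row_def atLeast0LessThan intro!: sum.cong)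

lemma mat_mult_sum: "A \<in> carrier_mat n n \<Longrightarrow> B \<in> carrier_mat n n \<Longrightarrow> a < n \<Longrightarrow> b < n \<Longrightarrow>
   (A * B) $$ (a,b) = (\<Sum>k<n. A $$ (a,k) * B $$ (k,b))"
  by (auto simp: scalar_prod_def row_def col_def atLeast0LessThan intro!: sum.cong)

lemma propag:
  fixes h :: "nat \<Rightarrow> real"
  assumes m: "1 \<le> m" and pp: "\<And>j. j < m \<Longrightarrow> 0 < p j \<and> p j < 1"
    and j0: "j0 < m" and mx: "\<And>j. j < m \<Longrightarrow> h j \<le> h j0"
    and st: "\<And>j. j < m \<Longrightarrow> h j = h j0 \<Longrightarrow> h j0 \<le> p j * h ((j+1) mod m) + (1 - p j) * h ((j+m-1) mod m)"
  shows "\<And>j. j < m \<Longrightarrow> h j = h j0"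
proof -
  have all: "h ((j0 + t) mod m) = h j0" for t
  proof (induction t)
    case 0 then show ?case using j0 by simp
  next
    case (Suc t)
    define j where "j = (j0 + t) mod m"
    have jm: "j < m" using m unfolding j_def by simp
    have e1: "(j+1) mod m = (j0 + Suc t) mod m" unfolding j_def by (simp add: mod_Suc_eq)
    have l1: "h ((j+1) mod m) \<le> h j0" using mx m by simp
    have l2: "h ((j+m-1) mod m) \<le> h j0" using mx m by simp
    have s: "h j0 \<le> p j * h ((j+1) mod m) + (1 - p j) * h ((j+m-1) mod m)"
      using st[OF jm] Suc.IH unfolding j_def by simp
    have q: "0 \<le> 1 - p j" using pp[OF jm] by simp
    have "(1 - p j) * h ((j+m-1) mod m) \<le> (1 - p j) * h j0" using mult_left_mono[OF l2 q] .
    with s have "p j * h j0 \<le> p j * h ((j+1) mod m)" by (simp add: algebra_simps)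
    then have "h j0 \<le> h ((j+1) mod m)" using pp[OF jm] by simp
    with l1 e1 show ?case by simp
  qed
  fix j assume "j < m"
  then have "(j0 + (j + m - j0)) mod m = j" using j0 by simp
  then show "h j = h j0" using all[of "j + m - j0"] by simp
qed

lemma exists_max:
  fixes h :: "nat \<Rightarrow> real"
  assumes "1 \<le> m" shows "\<exists>j0<m. \<forall>j<m. h j \<le> h j0"
proof -
  have fin: "finite (h ` {..<m})" by simp
  have "0 \<in> {..<m}" using assms by simp
  then have ne: "h ` {..<m} \<noteq> {}" by blast
  obtain j0 where "j0 < m" "h j0 = Max (h ` {..<m})" using Max_in[OF fin ne] by auto
  then show ?thesis using Max_ge[OF fin] by auto
qed

lemma kernel_const:
  fixes v :: "nat \<Rightarrow> real"
  assumes m: "1 \<le> m" and pp: "\<And>j. j < m \<Longrightarrow> 0 < p j \<and> p j < 1"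
    and k: "\<And>i. i < m \<Longrightarrow> v i = p i * v ((i+1) mod m) + (1 - p i) * v ((i+m-1) mod m)"
  shows "\<And>i. i < m \<Longrightarrow> v i = v 0"
proof -
  obtain j0 where j0: "j0 < m" "\<forall>j<m. v j \<le> v j0" using exists_max[OF m] by blast
  have "\<And>j. j < m \<Longrightarrow> v j = v j0"
  proof (rule propag[OF m pp j0(1)])
    show "\<And>j. j < m \<Longrightarrow> v j \<le> v j0" using j0 by auto
    fix j assume "j < m" "v j = v j0"
    then show "v j0 \<le> p j * v ((j + 1) mod m) + (1 - p j) * v ((j + m - 1) mod m)"
      using k[OF \<open>j < m\<close>] by linarith
  qed
  moreover have "v 0 = v j0" using \<open>\<And>j. j < m \<Longrightarrow> v j = v j0\<close>[of 0] m by simp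
  ultimately show "\<And>i. i < m \<Longrightarrow> v i = v 0" by simp
qed


lemma det_nonzero_sum:
  fixes A :: "real mat"
  assumes A: "A \<in> carrier_mat n n"
    and inj: "\<And>v. (\<And>a. a < n \<Longrightarrow> (\<Sum>b<n. A $$ (a,b) * v b) = 0) \<Longrightarrow> (\<And>a. a < n \<Longrightarrow> v a = 0)"
  shows "det A \<noteq> 0"
proof
  assume "det A = 0"
  then obtain w where w: "w \<in> carrier_vec n" "w \<noteq> 0\<^sub>v n" "A *\<^sub>v w = 0\<^sub>v n"
    using det_0_iff_vec_prod_zero[OF A] by blast
  have "\<And>a. a < n \<Longrightarrow> (\<Sum>b<n. A $$ (a,b) * vec_index w b) = 0"
    using w(3) mat_vec_sum[OF A w(1)] by (metis index_zero_vec(1))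
  then have "\<And>a. a < n \<Longrightarrow> vec_index w a = 0" by (rule inj)
  then have "w = 0\<^sub>v n" using w(1) by (intro eq_vecI) auto
  with w(2) show False by simp
qed

locale walkpar =
  fixes m :: nat and p :: "nat \<Rightarrow> real"
  assumes m: "1 \<le> m" and pp: "\<And>j. j < m \<Longrightarrow> 0 < p j \<and> p j < 1"
begin

abbreviation "Am \<equiv> 1\<^sub>m m - modm_matrix m p"

lemma Am_mult: "a < m \<Longrightarrow> (\<Sum>b<m. Am $$ (a,b) * v b) = v a - (p a * v ((a+1) mod m) + (1 - p a) * v ((a+m-1) mod m))"
proof -
  assume a: "a < m"
  have "(\<Sum>b<m. Am $$ (a,b) * v b) = (\<Sum>b<m. (if a = b then v b else 0) - Cm m p a b * v b)"
    using a by (intro sum.cong) (auto simp: Amat_idx left_diff_distrib)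
  also have "\<dots> = v a - (\<Sum>b<m. Cm m p a b * v b)" using a by (simp add: sum_subtractf)
  finally show ?thesis using Cm_sum[OF m a] by simp
qed

lemma det_Am: "det Am = 0"
proof -
  let ?v = "vec m (\<lambda>_. 1::real)"
  have "Am *\<^sub>v ?v = 0\<^sub>v m"
  proof (rule eq_vecI)
    fix a assume "a < dim_vec (0\<^sub>v m :: real vec)"
    then have a: "a < m" by simp
    have "vec_index (Am *\<^sub>v ?v) a = (\<Sum>b<m. Am $$ (a,b) * (\<lambda>_. 1) b)"
      using mat_vec_sum[OF Amat_carrier _ a, of ?v] by simp
    also have "\<dots> = 0" using Am_mult[OF a, of "\<lambda>_. 1"] by simp
    finally show "vec_index (Am *\<^sub>v ?v) a = vec_index (0\<^sub>v m) a" using a by simp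
  qed (simp add: modm_matrix_def)
  moreover have "?v \<noteq> 0\<^sub>v m"
  proof
    assume "?v = 0\<^sub>v m"
    then have "vec_index ?v 0 = vec_index (0\<^sub>v m) 0" by simp
    then show False using m by simp
  qed
  moreover have "?v \<in> carrier_vec m" by (rule vec_carrier)
  ultimately have "\<exists>v. v \<in> carrier_vec m \<and> v \<noteq> 0\<^sub>v m \<and> Am *\<^sub>v v = 0\<^sub>v m" by blast
  then show ?thesis by (subst det_0_iff_vec_prod_zero[OF Amat_carrier])
qed

lemma ker_Am: assumes h: "\<And>a. a < m \<Longrightarrow> (\<Sum>b<m. Am $$ (a,b) * v b) = 0" shows "i < m \<Longrightarrow> v i = v 0"
proof (rule kernel_const[OF m pp])
  fix a assume a: "a < m"
  show "v a = p a * v ((a+1) mod m) + (1 - p a) * v ((a+m-1) mod m)"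
    using h[OF a] Am_mult[OF a, of v] by linarith
qed

lemma cof_row_const:
  assumes j: "j < m" and k: "k < m"
  shows "cofactor Am j k = cofactor Am j j"
proof -
  have AA: "Am * adj_mat Am = 0 \<cdot>\<^sub>m 1\<^sub>m m" using adj_mat(2)[OF Amat_carrier] det_Am by simp
  have "(\<Sum>b<m. Am $$ (a,b) * cofactor Am j b) = 0" if a: "a < m" for a
  proof -
    have "(Am * adj_mat Am) $$ (a,j) = 0" using AA a j by simp
    moreover have "(Am * adj_mat Am) $$ (a,j) = (\<Sum>b<m. Am $$ (a,b) * adj_mat Am $$ (b,j))"
      by (rule mat_mult_sum[OF Amat_carrier adj_mat(1)[OF Amat_carrier] a j])
    moreover have "\<And>b. b < m \<Longrightarrow> adj_mat Am $$ (b,j) = cofactor Am j b"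
      using j unfolding adj_mat_def by (simp add: modm_matrix_def)
    ultimately show ?thesis by simp
  qed
  then have "\<And>i. i < m \<Longrightarrow> cofactor Am j i = cofactor Am j 0"
    by (rule ker_Am[where v = "\<lambda>b. cofactor Am j b"])
  from this[OF k] this[OF j] show ?thesis by simp
qed

lemma gamma_left: assumes b: "b < m" shows "(\<Sum>k<m. gamma m p k * Cm m p k b) = gamma m p b"
proof -
  have m0: "0 < m" using m by simp
  have AA: "adj_mat Am * Am = 0 \<cdot>\<^sub>m 1\<^sub>m m" using adj_mat(3)[OF Amat_carrier] det_Am by simp
  have "(adj_mat Am * Am) $$ (0,b) = 0" using AA m0 b by simp
  moreover have "(adj_mat Am * Am) $$ (0,b) = (\<Sum>k<m. adj_mat Am $$ (0,k) * Am $$ (k,b))"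
    by (rule mat_mult_sum[OF adj_mat(1)[OF Amat_carrier] Amat_carrier m0 b])
  moreover have "\<And>k. k < m \<Longrightarrow> adj_mat Am $$ (0,k) = gamma m p k"
  proof -
    fix k assume k: "k < m"
    have "adj_mat Am $$ (0,k) = cofactor Am k 0" using k m0 by (simp add: adj_mat_def modm_matrix_def)
    also have "\<dots> = cofactor Am k k" by (rule cof_row_const[OF k m0])
    finally show "adj_mat Am $$ (0,k) = gamma m p k" unfolding gamma_def .
  qed
  ultimately have "(\<Sum>k<m. gamma m p k * Am $$ (k,b)) = 0" by simp
  moreover have "(\<Sum>k<m. gamma m p k * Am $$ (k,b)) = (\<Sum>k<m. (if k = b then gamma m p k else 0) - gamma m p k * Cm m p k b)"
    using b by (intro sum.cong) (auto simp: Amat_idx right_diff_distrib)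
  ultimately show ?thesis using b by (simp add: sum_subtractf)
qed


definition Xm :: "nat \<Rightarrow> real \<Rightarrow> real mat" where
  "Xm i s = mat m m (\<lambda>(a,b). (if a = b then 1 else 0) - s * (if a = i then 0 else Cm m p a b))"

lemma Xm_carrier: "Xm i s \<in> carrier_mat m m" unfolding Xm_def by simp

lemma Xm_nonpos:
  assumes i: "i < m" and s: "0 \<le> s" "s \<le> 1"
    and vi: "v i = 0"
    and va: "\<And>a. a < m \<Longrightarrow> a \<noteq> i \<Longrightarrow> v a = s * (p a * v ((a+1) mod m) + (1 - p a) * v ((a+m-1) mod m))"
  shows "\<And>a. a < m \<Longrightarrow> v a \<le> 0"
proof -
  obtain j0 where j0: "j0 < m" "\<forall>j<m. v j \<le> v j0" using exists_max[OF m] by blast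
  have "v j0 \<le> 0"
  proof (rule ccontr)
    assume pos: "\<not> v j0 \<le> 0"
    have "\<And>j. j < m \<Longrightarrow> v j = v j0"
    proof (rule propag[OF m pp j0(1)])
      show "\<And>j. j < m \<Longrightarrow> v j \<le> v j0" using j0 by auto
      fix j assume j: "j < m" and e: "v j = v j0"
      then have "j \<noteq> i" using pos vi by auto
      define X where "X = p j * v ((j+1) mod m) + (1 - p j) * v ((j+m-1) mod m)"
      have vj: "v j0 = s * X" using va[OF j \<open>j \<noteq> i\<close>] e unfolding X_def by simp
      show "v j0 \<le> p j * v ((j+1) mod m) + (1 - p j) * v ((j+m-1) mod m)"
      proof (cases "X < 0")
        case True
        then have "s * X \<le> 0" using s by (simp add: mult_nonneg_nonpos)
        then show ?thesis using pos vj by simp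
      next
        case False
        then have "s * X \<le> X" using s by (simp add: mult_left_le_one_le)
        then show ?thesis using vj unfolding X_def by simp
      qed
    qed
    then have "v i = v j0" using i by simp
    then show False using pos vi by simp
  qed
  then show "\<And>a. a < m \<Longrightarrow> v a \<le> 0" using j0 by force
qed

lemma Xm_row: "a < m \<Longrightarrow> (\<Sum>b<m. Xm i s $$ (a,b) * v b) =
   v a - s * (if a = i then 0 else p a * v ((a+1) mod m) + (1 - p a) * v ((a+m-1) mod m))"
proof -
  assume a: "a < m"
  have "(\<Sum>b<m. Xm i s $$ (a,b) * v b) = (\<Sum>b<m. (if a = b then v b else 0) - s * ((if a = i then 0 else Cm m p a b) * v b))"
    using a unfolding Xm_def by (intro sum.cong) (auto simp: left_diff_distrib)
  also have "\<dots> = v a - s * (\<Sum>b<m. (if a = i then 0 else Cm m p a b) * v b)"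
    using a by (simp add: sum_subtractf sum_distrib_left)
  finally show ?thesis using Cm_sum[OF m a, where p=p and h=v] by simp
qed

lemma Xm_det_nonzero:
  assumes i: "i < m" and s: "0 \<le> s" "s \<le> 1"
  shows "det (Xm i s) \<noteq> 0"
proof (rule det_nonzero_sum[OF Xm_carrier])
  fix v assume h: "\<And>a. a < m \<Longrightarrow> (\<Sum>b<m. Xm i s $$ (a,b) * v b) = 0"
  have vi: "v i = 0" using h[OF i] Xm_row[OF i] by simp
  have va: "\<And>a. a < m \<Longrightarrow> a \<noteq> i \<Longrightarrow> v a = s * (p a * v ((a+1) mod m) + (1 - p a) * v ((a+m-1) mod m))"
    using h Xm_row by fastforce
  have "\<And>a. a < m \<Longrightarrow> v a \<le> 0" by (rule Xm_nonpos[OF i s vi va])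
  moreover have "\<And>a. a < m \<Longrightarrow> - v a \<le> 0"
  proof (rule Xm_nonpos[OF i s, of "\<lambda>a. - v a"])
    show "- v i = 0" using vi by simp
    fix a assume a: "a < m" "a \<noteq> i"
    have e: "v a = s * (p a * v ((a+1) mod m) + (1 - p a) * v ((a+m-1) mod m))" by (rule va[OF a])
    show "- v a = s * (p a * - v ((a+1) mod m) + (1 - p a) * - v ((a+m-1) mod m))"
      unfolding e by (simp add: algebra_simps)
  qed
  ultimately show "\<And>a. a < m \<Longrightarrow> v a = 0" by force
qed

lemma Xm_det_formula: "det (Xm i s) = (\<Sum>\<pi>\<in>{\<pi>. \<pi> permutes {0..<m}}. signof \<pi> *
   (\<Prod>a=0..<m. (if a = \<pi> a then 1 else 0) - s * (if a = i then 0 else Cm m p a (\<pi> a))))"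
  unfolding det_def'[OF Xm_carrier]
proof (intro sum.cong refl arg_cong2[where f = "(*)"] prod.cong)
  fix \<pi> a assume "\<pi> \<in> {\<pi>. \<pi> permutes {0..<m}}" "a \<in> {0..<m}"
  then have "\<pi> a < m" "a < m" by (auto dest: permutes_in_image)
  then show "Xm i s $$ (a, \<pi> a) = (if a = \<pi> a then 1 else 0) - s * (if a = i then 0 else Cm m p a (\<pi> a))"
    unfolding Xm_def by simp
qed

lemma Xm_0: "Xm i 0 = 1\<^sub>m m"
  unfolding Xm_def by (rule eq_matI) auto

lemma Xm_1_det: assumes i: "i < m" shows "det (Xm i 1) = gamma m p i"
proof -
  have "det (Xm i 1) = (\<Sum>b<m. Xm i 1 $$ (i,b) * cofactor (Xm i 1) i b)"
    by (rule laplace_expansion_row[OF Xm_carrier i])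
  also have "\<dots> = (\<Sum>b<m. if b = i then cofactor (Xm i 1) i b else 0)"
    using i by (intro sum.cong) (auto simp: Xm_def)
  also have "\<dots> = cofactor (Xm i 1) i i" using i by (simp add: sum.delta')
  also have "mat_delete (Xm i 1) i i = mat_delete Am i i"
    unfolding mat_delete_def
    by (rule eq_matI) (auto simp: Xm_def modm_matrix_def Cm_def)
  then have "cofactor (Xm i 1) i i = cofactor Am i i" unfolding cofactor_def by simp
  finally show ?thesis unfolding gamma_def .
qed

lemma gamma_pos: assumes i: "i < m" shows "0 < gamma m p i"
proof (rule ccontr)
  assume "\<not> 0 < gamma m p i"
  then have f1: "det (Xm i 1) \<le> 0" using Xm_1_det[OF i] by simp
  have f0: "0 \<le> det (Xm i 0)" using Xm_0 by simp
  have "continuous_on {0..1} (\<lambda>s. det (Xm i s))"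
    unfolding Xm_det_formula by (intro continuous_intros)
  then obtain s where "0 \<le> s" "s \<le> 1" "det (Xm i s) = 0"
    using IVT2'[of "\<lambda>s. det (Xm i s)" 1 0 0] f0 f1 by auto
  then show False using Xm_det_nonzero[OF i] by blast
qed

lemma gamma_sum_pos: "0 < (\<Sum>i<m. gamma m p i)"
  using m gamma_pos by (intro sum_pos) (auto simp: lessThan_empty_iff)

end

context walkpar begin

lemma solve_poisson:
  fixes d :: "nat \<Rightarrow> real"
  defines "c \<equiv> (1 / (\<Sum>i<m. gamma m p i)) * (\<Sum>i<m. gamma m p i * d i)"
  shows "\<exists>h. \<forall>a<m. p a * h ((a+1) mod m) + (1 - p a) * h ((a+m-1) mod m) = h a - d a + c"
proof -
  let ?g = "gamma m p"
  let ?G = "\<Sum>i<m. ?g i"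
  have G: "0 < ?G" by (rule gamma_sum_pos)
  define N where "N = mat m m (\<lambda>(a,b). Am $$ (a,b) + ?g b)"
  have Nc: "N \<in> carrier_mat m m" unfolding N_def by simp
  have gA: "(\<Sum>a<m. ?g a * (\<Sum>b<m. Am $$ (a,b) * v b)) = 0" for v
  proof -
    have "(\<Sum>a<m. ?g a * (\<Sum>b<m. Am $$ (a,b) * v b)) = (\<Sum>a<m. \<Sum>b<m. ?g a * (Am $$ (a,b) * v b))"
      by (simp add: sum_distrib_left)
    also have "\<dots> = (\<Sum>b<m. \<Sum>a<m. ?g a * (Am $$ (a,b) * v b))"
      by (rule sum.swap)
    also have "\<dots> = (\<Sum>b<m. (\<Sum>a<m. ?g a * Am $$ (a,b)) * v b)"
      by (simp add: sum_distrib_right mult.assoc)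
    also have "\<dots> = 0"
    proof (intro sum.neutral ballI)
      fix b assume b: "b \<in> {..<m}"
      have "(\<Sum>a<m. ?g a * Am $$ (a,b)) = (\<Sum>a<m. (if a = b then ?g a else 0) - ?g a * Cm m p a b)"
        using b by (intro sum.cong) (auto simp: Amat_idx right_diff_distrib)
      also have "\<dots> = 0" using b gamma_left[of b] by (simp add: sum_subtractf)
      finally show "(\<Sum>a<m. ?g a * Am $$ (a,b)) * v b = 0" by simp
    qed
    finally show ?thesis .
  qed
  have Nrow: "(\<Sum>b<m. N $$ (a,b) * v b) = (\<Sum>b<m. Am $$ (a,b) * v b) + (\<Sum>b<m. ?g b * v b)" if "a < m" for a v
    using that unfolding N_def by (simp add: sum.distrib distrib_right)
  have key: "(\<And>a. a < m \<Longrightarrow> (\<Sum>b<m. Am $$ (a,b) * v b) + t = w a) \<Longrightarrow> (\<Sum>a<m. ?g a * w a) = 0 \<Longrightarrow> t = 0" for v w t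
  proof -
    assume h1: "\<And>a. a < m \<Longrightarrow> (\<Sum>b<m. Am $$ (a,b) * v b) + t = w a" and h2: "(\<Sum>a<m. ?g a * w a) = 0"
    have "(\<Sum>a<m. ?g a * w a) = (\<Sum>a<m. ?g a * ((\<Sum>b<m. Am $$ (a,b) * v b) + t))"
      by (intro sum.cong refl) (simp add: h1[symmetric])
    also have "\<dots> = (\<Sum>a<m. ?g a * (\<Sum>b<m. Am $$ (a,b) * v b)) + (\<Sum>a<m. ?g a) * t"
      by (simp add: distrib_left sum.distrib sum_distrib_right)
    finally have "(\<Sum>a<m. ?g a * w a) = (\<Sum>a<m. ?g a * (\<Sum>b<m. Am $$ (a,b) * v b)) + t * ?G"
      by (simp add: mult.commute)
    then have "t * ?G = 0" using h2 gA[of v] by simp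
    then show "t = 0" using G by simp
  qed
  have detN: "det N \<noteq> 0"
  proof (rule det_nonzero_sum[OF Nc])
    fix v assume h: "\<And>a. a < m \<Longrightarrow> (\<Sum>b<m. N $$ (a,b) * v b) = 0"
    have t0: "(\<Sum>b<m. ?g b * v b) = 0"
      by (rule key[of v _ "\<lambda>_. 0"]) (use h Nrow in auto)
    then have "\<And>a. a < m \<Longrightarrow> (\<Sum>b<m. Am $$ (a,b) * v b) = 0" using h Nrow by simp
    then have vc: "\<And>a. a < m \<Longrightarrow> v a = v 0" using ker_Am by blast
    have "(\<Sum>b<m. ?g b * v b) = (\<Sum>b<m. ?g b * v 0)"
      by (rule sum.cong[OF refl]) (metis lessThan_iff vc)
    also have "\<dots> = v 0 * ?G" by (simp add: sum_distrib_left mult.commute)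
    finally have "v 0 = 0" using t0 G by simp
    then show "\<And>a. a < m \<Longrightarrow> v a = 0" using vc by metis
  qed
  define w where "w a = d a - c" for a
  define h where "h a = (1 / det N) * (\<Sum>k<m. adj_mat N $$ (a,k) * w k)" for a
  have Nh: "(\<Sum>b<m. N $$ (a,b) * h b) = w a" if a: "a < m" for a
  proof -
    have NN: "N * adj_mat N = det N \<cdot>\<^sub>m 1\<^sub>m m" by (rule adj_mat(2)[OF Nc])
    have "(\<Sum>b<m. N $$ (a,b) * h b) = (1 / det N) * (\<Sum>b<m. \<Sum>k<m. N $$ (a,b) * (adj_mat N $$ (b,k) * w k))"
      unfolding h_def by (simp add: sum_distrib_left mult_ac)
    also have "\<dots> = (1 / det N) * (\<Sum>k<m. \<Sum>b<m. N $$ (a,b) * (adj_mat N $$ (b,k) * w k))"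
      by (subst sum.swap) (rule refl)
    also have "\<dots> = (1 / det N) * (\<Sum>k<m. (\<Sum>b<m. N $$ (a,b) * adj_mat N $$ (b,k)) * w k)"
      by (simp add: sum_distrib_right mult.assoc)
    also have "\<dots> = (1 / det N) * (\<Sum>k<m. (if a = k then det N else 0) * w k)"
    proof -
      have "\<And>k. k < m \<Longrightarrow> (\<Sum>b<m. N $$ (a,b) * adj_mat N $$ (b,k)) = (if a = k then det N else 0)"
      proof -
        fix k assume k: "k < m"
        have "(\<Sum>b<m. N $$ (a,b) * adj_mat N $$ (b,k)) = (N * adj_mat N) $$ (a,k)"
          using mat_mult_sum[OF Nc adj_mat(1)[OF Nc] a k] by simp
        also have "\<dots> = (det N \<cdot>\<^sub>m 1\<^sub>m m) $$ (a,k)" using NN by simp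
        also have "\<dots> = (if a = k then det N else 0)" using a k by simp
        finally show "(\<Sum>b<m. N $$ (a,b) * adj_mat N $$ (b,k)) = (if a = k then det N else 0)" .
      qed
      then show ?thesis by simp
    qed
    also have "(\<Sum>k<m. (if a = k then det N else 0) * w k) = (\<Sum>k<m. if a = k then det N * w k else 0)"
      by (intro sum.cong) auto
    also have "\<dots> = det N * w a" using a by (simp add: sum.delta)
    also have "(1 / det N) * (det N * w a) = w a" using detN by simp
    finally show ?thesis .
  qed
  have wsum: "(\<Sum>a<m. ?g a * w a) = 0"
  proof -
    have "(\<Sum>a<m. ?g a * w a) = (\<Sum>a<m. ?g a * d a) - c * ?G"
      unfolding w_def by (simp add: right_diff_distrib sum_subtractf sum_distrib_left mult.commute)
    then show ?thesis unfolding c_def using G by simp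
  qed
  have t0: "(\<Sum>b<m. ?g b * h b) = 0"
    by (rule key[of h _ w]) (use Nh Nrow wsum in auto)
  have "\<forall>a<m. p a * h ((a+1) mod m) + (1 - p a) * h ((a+m-1) mod m) = h a - d a + c"
  proof (intro allI impI)
    fix a assume a: "a < m"
    have "(\<Sum>b<m. Am $$ (a,b) * h b) = w a" using Nh[OF a] Nrow[OF a] t0 by simp
    then show "p a * h ((a+1) mod m) + (1 - p a) * h ((a+m-1) mod m) = h a - d a + c"
      using Am_mult[OF a] unfolding w_def by simp
  qed
  then show ?thesis by blast
qed

end

locale mwalk = walkpar m p for m p +
  fixes M :: "'a measure" and S :: "nat \<Rightarrow> 'a \<Rightarrow> int"
  assumes mw: "mod_walk M m p S"
begin

lemma prob: "prob_space M" using mw unfolding mod_walk_def by simp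

sublocale P: prob_space M by (rule prob)

lemma S_meas[measurable]: "S n \<in> measurable M (count_space UNIV)"
  using mw unfolding mod_walk_def by simp

lemma AE_step: "AE \<omega> in M. \<forall>k. S (Suc k) \<omega> - S k \<omega> \<in> {-1, 1}"
  using mw unfolding mod_walk_def by (simp add: AE_all_countable)

lemma hyp_plus: "measure M {\<omega> \<in> space M. (\<forall>k\<le>n. S k \<omega> = s k) \<and> S (Suc n) \<omega> = s n + 1}
          = p (nat (s n mod int m)) * measure M {\<omega> \<in> space M. \<forall>k\<le>n. S k \<omega> = s k}"
  using mw unfolding mod_walk_def by blast

lemma hyp_minus: "measure M {\<omega> \<in> space M. (\<forall>k\<le>n. S k \<omega> = s k) \<and> S (Suc n) \<omega> = s n - 1}
          = (1 - p (nat (s n mod int m))) * measure M {\<omega> \<in> space M. \<forall>k\<le>n. S k \<omega> = s k}"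
  using mw unfolding mod_walk_def by blast

definition hist :: "nat \<Rightarrow> 'a \<Rightarrow> int list" where
  "hist n \<omega> = map (\<lambda>k. S k \<omega>) [0..<Suc n]"

lemma hist_nth: "k \<le> n \<Longrightarrow> hist n \<omega> ! k = S k \<omega>"
  unfolding hist_def by (simp del: upt_Suc add: nth_map)

lemma hist_len[simp]: "length (hist n \<omega>) = Suc n"
  unfolding hist_def by simp

lemma S_pre_sets: "{\<omega> \<in> space M. S k \<omega> = v} \<in> sets M"
proof -
  have "S k -` {v} \<inter> space M \<in> sets M" by (rule measurable_sets[OF S_meas]) simp
  moreover have "S k -` {v} \<inter> space M = {\<omega> \<in> space M. S k \<omega> = v}" by auto
  ultimately show ?thesis by simp
qed

lemma cyl_sets: "{\<omega> \<in> space M. \<forall>k\<le>n. S k \<omega> = s k} \<in> sets M"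
proof -
  have "{\<omega> \<in> space M. \<forall>k\<le>n. S k \<omega> = s k} = (\<Inter>k\<in>{..n}. {\<omega> \<in> space M. S k \<omega> = s k})" by auto
  moreover have "(\<Inter>k\<in>{..n}. {\<omega> \<in> space M. S k \<omega> = s k}) \<in> sets M"
    by (rule sets.finite_INT) (auto intro: S_pre_sets)
  ultimately show ?thesis by simp
qed

lemma hist_eq_iff: "length l = Suc n \<Longrightarrow> hist n \<omega> = l \<longleftrightarrow> (\<forall>k\<le>n. S k \<omega> = l ! k)"
  by (auto simp: list_eq_iff_nth_eq hist_nth less_Suc_eq_le)

lemma hist_pre: "hist n -` {l} \<inter> space M = (if length l = Suc n then {\<omega> \<in> space M. \<forall>k\<le>n. S k \<omega> = l ! k} else {})"
  using hist_eq_iff[of l n] by auto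

lemma hist_meas[measurable]: "hist n \<in> measurable M (count_space UNIV)"
proof (subst measurable_count_space_eq2_countable, intro conjI ballI)
  fix l :: "int list"
  show "hist n -` {l} \<inter> space M \<in> sets M" unfolding hist_pre using cyl_sets by simp
qed auto

lemma fun_hist_meas: "(\<lambda>\<omega>. f (hist n \<omega>)) \<in> borel_measurable M"
  by (rule measurable_compose[OF hist_meas]) simp

definition Fn :: "nat \<Rightarrow> 'a measure" where
  "Fn n = vimage_algebra (space M) (hist n) (count_space UNIV)"

lemma Fn_subalg: "subalgebra M (Fn n)"
  unfolding subalgebra_def Fn_def
  using sets_image_in_sets[OF refl hist_meas] by (simp add: space_vimage_algebra)

lemma Fn_sets: "A \<in> sets (Fn n) \<Longrightarrow> \<exists>H. A = hist n -` H \<inter> space M"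
  unfolding Fn_def by (subst (asm) sets_vimage_algebra2) auto

lemma fun_hist_meas_F: "(\<lambda>\<omega>. f (hist n \<omega>)) \<in> borel_measurable (Fn n)"
  unfolding Fn_def
  by (rule measurable_compose[OF measurable_vimage_algebra1]) simp_all

definition Rset :: "nat \<Rightarrow> nat \<Rightarrow> 'a set" where
  "Rset n r = {\<omega> \<in> space M. nat (S n \<omega> mod int m) = r}"

definition Eset :: "nat \<Rightarrow> int \<Rightarrow> 'a set" where
  "Eset n \<sigma> = {\<omega> \<in> space M. S (Suc n) \<omega> = S n \<omega> + \<sigma>}"

lemma Rset_sets[measurable]: "Rset n r \<in> sets M"
proof -
  have "Rset n r = (\<lambda>\<omega>. (\<lambda>l. nat (l ! n mod int m) = r) (hist n \<omega>)) -` {True} \<inter> space M"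
    unfolding Rset_def by (auto simp: hist_nth)
  also have "\<dots> \<in> sets M" by (rule measurable_sets[OF fun_hist_meas]) auto
  finally show ?thesis .
qed

lemma Eset_sets[measurable]: "Eset n \<sigma> \<in> sets M"
proof -
  have "Eset n \<sigma> = (\<lambda>\<omega>. (\<lambda>l. l ! Suc n = l ! n + \<sigma>) (hist (Suc n) \<omega>)) -` {True} \<inter> space M"
    unfolding Eset_def by (auto simp: hist_nth)
  also have "\<dots> \<in> sets M" by (rule measurable_sets[OF fun_hist_meas]) auto
  finally show ?thesis .
qed

lemma L_gen:
  assumes A: "A \<in> sets (Fn n)" and r: "r < m"
    and hyp: "\<And>s. measure M {\<omega> \<in> space M. (\<forall>k\<le>n. S k \<omega> = s k) \<and> S (Suc n) \<omega> = s n + \<sigma>}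
          = pr (nat (s n mod int m)) * measure M {\<omega> \<in> space M. \<forall>k\<le>n. S k \<omega> = s k}"
    and pr0: "0 \<le> pr r"
  shows "measure M (A \<inter> Rset n r \<inter> Eset n \<sigma>) = pr r * measure M (A \<inter> Rset n r)"
proof -
  obtain H where H: "A = hist n -` H \<inter> space M" using Fn_sets[OF A] by blast
  define H' where "H' = {l \<in> H. length l = Suc n \<and> nat ((l ! n) mod int m) = r}"
  define cyl where "cyl l = {\<omega> \<in> space M. \<forall>k\<le>n. S k \<omega> = l ! k}" for l
  define cylE where "cylE l = {\<omega> \<in> space M. (\<forall>k\<le>n. S k \<omega> = l ! k) \<and> S (Suc n) \<omega> = l ! n + \<sigma>}" for l
  have cnt: "countable H'" by (rule countableI_type)
  have U1: "A \<inter> Rset n r = (\<Union>l\<in>H'. cyl l)"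
  proof (intro equalityI subsetI)
    fix \<omega> assume "\<omega> \<in> A \<inter> Rset n r"
    then have "hist n \<omega> \<in> H'" "\<omega> \<in> cyl (hist n \<omega>)"
      unfolding H H'_def Rset_def cyl_def by (auto simp: hist_nth)
    then show "\<omega> \<in> (\<Union>l\<in>H'. cyl l)" by blast
  next
    fix \<omega> assume "\<omega> \<in> (\<Union>l\<in>H'. cyl l)"
    then obtain l where l: "l \<in> H'" "\<omega> \<in> cyl l" by blast
    then have "hist n \<omega> = l" unfolding H'_def cyl_def using hist_eq_iff by auto
    then show "\<omega> \<in> A \<inter> Rset n r" using l unfolding H H'_def Rset_def cyl_def by (auto simp: hist_nth)
  qed
  have U2: "A \<inter> Rset n r \<inter> Eset n \<sigma> = (\<Union>l\<in>H'. cylE l)"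
  proof (intro equalityI subsetI)
    fix \<omega> assume "\<omega> \<in> A \<inter> Rset n r \<inter> Eset n \<sigma>"
    then have "hist n \<omega> \<in> H'" "\<omega> \<in> cylE (hist n \<omega>)"
      unfolding H H'_def Rset_def cylE_def Eset_def by (auto simp: hist_nth)
    then show "\<omega> \<in> (\<Union>l\<in>H'. cylE l)" by blast
  next
    fix \<omega> assume "\<omega> \<in> (\<Union>l\<in>H'. cylE l)"
    then obtain l where l: "l \<in> H'" "\<omega> \<in> cylE l" by blast
    then have "hist n \<omega> = l" unfolding H'_def cylE_def using hist_eq_iff by auto
    then show "\<omega> \<in> A \<inter> Rset n r \<inter> Eset n \<sigma>" using l unfolding H H'_def Rset_def cylE_def Eset_def
      by (auto simp: hist_nth)
  qed
  have cyl_s: "cyl l \<in> sets M" for l unfolding cyl_def by (rule cyl_sets)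
  have cylE_s: "cylE l \<in> sets M" for l
  proof -
    have "cylE l = cyl l \<inter> {\<omega> \<in> space M. S (Suc n) \<omega> = l ! n + \<sigma>}" unfolding cylE_def cyl_def by auto
    then show ?thesis using cyl_s S_pre_sets by auto
  qed
  have dis1: "disjoint_family_on cyl H'"
    unfolding disjoint_family_on_def cyl_def H'_def
    by (auto simp: hist_eq_iff[symmetric])
  have dis2: "disjoint_family_on cylE H'"
    unfolding disjoint_family_on_def cylE_def H'_def
    by (auto simp: hist_eq_iff[symmetric])
  have each: "emeasure M (cylE l) = ennreal (pr r) * emeasure M (cyl l)" if l: "l \<in> H'" for l
  proof -
    have "measure M (cylE l) = pr (nat (l ! n mod int m)) * measure M (cyl l)"
      unfolding cylE_def cyl_def by (rule hyp)
    also have "nat (l ! n mod int m) = r" using l unfolding H'_def by simp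
    finally have "measure M (cylE l) = pr r * measure M (cyl l)" .
    then show ?thesis using pr0 by (simp add: P.emeasure_eq_measure ennreal_mult)
  qed
  have "emeasure M (A \<inter> Rset n r \<inter> Eset n \<sigma>) = (\<integral>\<^sup>+l. emeasure M (cylE l) \<partial>count_space H')"
    unfolding U2 by (rule emeasure_UN_countable[OF cylE_s cnt dis2])
  also have "\<dots> = (\<integral>\<^sup>+l. ennreal (pr r) * emeasure M (cyl l) \<partial>count_space H')"
    by (rule nn_integral_cong) (simp add: each)
  also have "\<dots> = ennreal (pr r) * (\<integral>\<^sup>+l. emeasure M (cyl l) \<partial>count_space H')"
    by (rule nn_integral_cmult) simp
  also have "(\<integral>\<^sup>+l. emeasure M (cyl l) \<partial>count_space H') = emeasure M (A \<inter> Rset n r)"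
    unfolding U1 by (rule emeasure_UN_countable[OF cyl_s cnt dis1, symmetric])
  finally have "emeasure M (A \<inter> Rset n r \<inter> Eset n \<sigma>) = ennreal (pr r) * emeasure M (A \<inter> Rset n r)" .
  then show ?thesis using pr0 by (simp add: P.emeasure_eq_measure ennreal_mult[symmetric] measure_nonneg)
qed

lemma L_plus: assumes "A \<in> sets (Fn n)" "r < m" shows "measure M (A \<inter> Rset n r \<inter> Eset n 1) = p r * measure M (A \<inter> Rset n r)"
  using assms hyp_plus pp[OF assms(2)] by (intro L_gen[where pr = p]) auto

lemma L_minus: assumes "A \<in> sets (Fn n)" "r < m" shows "measure M (A \<inter> Rset n r \<inter> Eset n (-1)) = (1 - p r) * measure M (A \<inter> Rset n r)"
  using assms hyp_minus pp[OF assms(2)] by (intro L_gen[where pr = "\<lambda>r. 1 - p r"]) auto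

end

lemma nat_mod_plus1: fixes x :: int assumes "1 \<le> m"
  shows "nat ((x + 1) mod int m) = (nat (x mod int m) + 1) mod m"
proof -
  have "(x + 1) mod int m = (x mod int m + 1) mod int m" by (simp add: mod_simps)
  moreover have "0 \<le> x mod int m" using assms by simp
  ultimately show ?thesis by (simp add: nat_mod_distrib nat_add_distrib)
qed

lemma nat_mod_minus1: fixes x :: int assumes "1 \<le> m"
  shows "nat ((x - 1) mod int m) = (nat (x mod int m) + m - 1) mod m"
proof -
  have "(x - 1) mod int m = (x mod int m - 1) mod int m" by (simp add: mod_diff_left_eq)
  also have "\<dots> = (x mod int m - 1 + int m) mod int m" by simp
  finally have "(x - 1) mod int m = (x mod int m + int m - 1) mod int m" by (simp add: algebra_simps)
  moreover have "0 \<le> x mod int m" using assms by simp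
  moreover have "nat (x mod int m + int m - 1) = nat (x mod int m) + m - 1"
  proof -
    obtain k where k: "x mod int m = int k" using \<open>0 \<le> x mod int m\<close> nonneg_int_cases by blast
    have "int k + int m - 1 = int (k + m - 1)" using assms by (simp add: of_nat_diff)
    then show ?thesis unfolding k by (metis nat_int)
  qed
  moreover have y0: "0 \<le> x mod int m + int m - 1" using \<open>0 \<le> x mod int m\<close> assms by linarith
  moreover have "nat ((x mod int m + int m - 1) mod int m) = nat (x mod int m + int m - 1) mod nat (int m)"
    by (rule nat_mod_distrib[OF y0]) simp
  ultimately show ?thesis by simp
qed

locale mwalk2 = mwalk m p M S for m p M S +
  fixes h :: "nat \<Rightarrow> real" and c :: real
  assumes poisson: "\<And>a. a < m \<Longrightarrow> p a * h ((a+1) mod m) + (1 - p a) * h ((a+m-1) mod m) = h a - (p a - (1 - p a)) + c"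
begin

definition Fh :: "int \<Rightarrow> real" where "Fh x = real_of_int x + h (nat (x mod int m))"
definition D :: "nat \<Rightarrow> 'a \<Rightarrow> real" where "D n \<omega> = Fh (S (Suc n) \<omega>) - Fh (S n \<omega>) - c"
definition Y :: "nat \<Rightarrow> 'a \<Rightarrow> real" where "Y n \<omega> = Fh (S n \<omega>) - Fh (S 0 \<omega>) - real n * c"
definition Hm :: real where "Hm = (\<Sum>a<m. \<bar>h a\<bar>)"
definition B :: real where "B = 1 + 2 * Hm + \<bar>c\<bar>"
definition up :: "nat \<Rightarrow> real" where "up r = 1 + h ((r+1) mod m) - h r - c"
definition um :: "nat \<Rightarrow> real" where "um r = -1 + h ((r+m-1) mod m) - h r - c"

lemma Hm_ge: "a < m \<Longrightarrow> \<bar>h a\<bar> \<le> Hm"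
  unfolding Hm_def by (rule member_le_sum) auto

lemma Hm_nonneg: "0 \<le> Hm" unfolding Hm_def by (simp add: sum_nonneg)

lemma B_ge1: "1 \<le> B" unfolding B_def using Hm_nonneg by simp

lemma hx_bound: "\<bar>h (nat (x mod int m))\<bar> \<le> Hm"
proof (rule Hm_ge)
  show "nat (x mod int m) < m" using m by (simp add: nat_less_iff)
qed

lemma pu: "r < m \<Longrightarrow> p r * up r + (1 - p r) * um r = 0"
  using poisson[of r] unfolding up_def um_def by (simp add: algebra_simps)

lemma D_hist: "D n \<omega> = (\<lambda>l. Fh (l ! Suc n) - Fh (l ! n) - c) (hist (Suc n) \<omega>)"
  unfolding D_def by (simp add: hist_nth)

lemma Y_hist: "Y n \<omega> = (\<lambda>l. Fh (l ! n) - Fh (l ! 0) - real n * c) (hist n \<omega>)"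
  unfolding Y_def by (simp add: hist_nth)

lemma D_meas[measurable]: "D n \<in> borel_measurable M"
  by (subst D_hist[abs_def]) (rule fun_hist_meas)

lemma Y_meas[measurable]: "Y n \<in> borel_measurable M"
  by (subst Y_hist[abs_def]) (rule fun_hist_meas)

lemma Y_Suc: "Y (Suc n) \<omega> = Y n \<omega> + D n \<omega>"
  unfolding Y_def D_def by (simp add: algebra_simps)

lemma Y_0: "Y 0 \<omega> = 0" unfolding Y_def by simp

lemma D_bound_pt: assumes "S (Suc n) \<omega> - S n \<omega> \<in> {-1, 1}" shows "\<bar>D n \<omega>\<bar> \<le> B"
proof -
  have "\<bar>D n \<omega>\<bar> \<le> \<bar>real_of_int (S (Suc n) \<omega> - S n \<omega>)\<bar> + \<bar>h (nat (S (Suc n) \<omega> mod int m))\<bar> + \<bar>h (nat (S n \<omega> mod int m))\<bar> + \<bar>c\<bar>"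
    unfolding D_def Fh_def by linarith
  also have "\<dots> \<le> 1 + Hm + Hm + \<bar>c\<bar>" using assms hx_bound[of "S (Suc n) \<omega>"] hx_bound[of "S n \<omega>"] by auto
  finally show ?thesis unfolding B_def by simp
qed

lemma AE_D: "AE \<omega> in M. \<forall>k. \<bar>D k \<omega>\<bar> \<le> B"
  using AE_step by eventually_elim (auto intro: D_bound_pt)

lemma Y_sum: "Y n \<omega> = (\<Sum>k<n. D k \<omega>)"
  by (induction n) (simp_all add: Y_0 Y_Suc)

lemma AE_Y: "AE \<omega> in M. \<forall>n. \<bar>Y n \<omega>\<bar> \<le> real n * B"
  using AE_D
proof eventually_elim
  case (elim \<omega>)
  show ?case
  proof
    fix n
    have "\<bar>Y n \<omega>\<bar> \<le> (\<Sum>k<n. \<bar>D k \<omega>\<bar>)" unfolding Y_sum by (rule sum_abs)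
    also have "\<dots> \<le> (\<Sum>k<n. B)" using elim by (intro sum_mono) auto
    finally show "\<bar>Y n \<omega>\<bar> \<le> real n * B" by simp
  qed
qed

lemma intg: "(f :: 'a \<Rightarrow> real) \<in> borel_measurable M \<Longrightarrow> AE \<omega> in M. \<bar>f \<omega>\<bar> \<le> K \<Longrightarrow> integrable M f"
  by (rule P.integrable_const_bound[where B = K]) auto

lemma D_decomp:
  assumes \<omega>: "\<omega> \<in> space M" and st: "S (Suc n) \<omega> - S n \<omega> \<in> {-1, 1}"
  shows "D n \<omega> = (\<Sum>r<m. indicator (Rset n r \<inter> Eset n 1) \<omega> * up r + indicator (Rset n r \<inter> Eset n (-1)) \<omega> * um r)"
proof -
  define r0 where "r0 = nat (S n \<omega> mod int m)"
  have r0: "r0 < m" unfolding r0_def using m by (simp add: nat_less_iff)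
  have "(\<Sum>r<m. indicator (Rset n r \<inter> Eset n 1) \<omega> * up r + indicator (Rset n r \<inter> Eset n (-1)) \<omega> * um r)
      = (\<Sum>r<m. if r = r0 then indicator (Eset n 1) \<omega> * up r + indicator (Eset n (-1)) \<omega> * um r else 0)"
    by (intro sum.cong refl) (auto simp: Rset_def r0_def \<omega> indicator_def)
  also have "\<dots> = indicator (Eset n 1) \<omega> * up r0 + indicator (Eset n (-1)) \<omega> * um r0"
    using r0 by (simp add: sum.delta')
  also have "\<dots> = D n \<omega>"
  proof (cases "S (Suc n) \<omega> = S n \<omega> + 1")
    case True
    then show ?thesis unfolding D_def Fh_def up_def r0_def
      using \<omega> by (simp add: Eset_def indicator_def nat_mod_plus1[OF m])
  next
    case False
    then have F: "S (Suc n) \<omega> = S n \<omega> - 1" using st by auto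
    then show ?thesis unfolding D_def Fh_def um_def r0_def
      using \<omega> by (simp add: Eset_def indicator_def nat_mod_minus1[OF m])
  qed
  finally show ?thesis by simp
qed

lemma D_int_A:
  assumes A: "A \<in> sets (Fn n)"
  shows "(\<integral>\<omega>. indicator A \<omega> * D n \<omega> \<partial>M) = 0"
proof -
  have AM: "A \<in> sets M" using Fn_subalg A unfolding subalgebra_def by auto
  have "(\<integral>\<omega>. indicator A \<omega> * D n \<omega> \<partial>M) =
     (\<integral>\<omega>. (\<Sum>r<m. indicator (A \<inter> Rset n r \<inter> Eset n 1) \<omega> * up r + indicator (A \<inter> Rset n r \<inter> Eset n (-1)) \<omega> * um r) \<partial>M)"
  proof (rule integral_cong_AE)
    show "AE \<omega> in M. indicator A \<omega> * D n \<omega> = (\<Sum>r<m. indicator (A \<inter> Rset n r \<inter> Eset n 1) \<omega> * up r + indicator (A \<inter> Rset n r \<inter> Eset n (-1)) \<omega> * um r)"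
      using AE_step AE_space
    proof eventually_elim
      case (elim \<omega>)
      then have "D n \<omega> = (\<Sum>r<m. indicator (Rset n r \<inter> Eset n 1) \<omega> * up r + indicator (Rset n r \<inter> Eset n (-1)) \<omega> * um r)"
        by (intro D_decomp) auto
      then show ?case by (simp add: sum_distrib_left indicator_inter_arith algebra_simps)
    qed
  qed (use AM in measurable)
  also have "\<dots> = (\<Sum>r<m. measure M (A \<inter> Rset n r \<inter> Eset n 1) * up r + measure M (A \<inter> Rset n r \<inter> Eset n (-1)) * um r)"
  proof -
    have s: "(A \<inter> Rset n r \<inter> Eset n \<sigma>) \<in> sets M" for r \<sigma> using AM by auto
    have i: "integrable M (indicator (A \<inter> Rset n r \<inter> Eset n \<sigma>) :: 'a \<Rightarrow> real)" for r \<sigma>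
      using s by (intro integrable_real_indicator) (auto simp: P.emeasure_eq_measure)
    have ii: "integrable M (\<lambda>\<omega>. indicator (A \<inter> Rset n r \<inter> Eset n \<sigma>) \<omega> * (k::real))" for r \<sigma> k
      using i[of r \<sigma>] by (rule integrable_mult_left)
    have ei: "(\<integral>\<omega>. indicator (A \<inter> Rset n r \<inter> Eset n \<sigma>) \<omega> * (k::real) \<partial>M) = measure M (A \<inter> Rset n r \<inter> Eset n \<sigma>) * k" for r \<sigma> k
    proof -
      have "(A \<inter> Rset n r \<inter> Eset n \<sigma>) \<inter> space M = A \<inter> Rset n r \<inter> Eset n \<sigma>"
        using sets.sets_into_space[OF s[of r \<sigma>]] by blast
      then show ?thesis by simp
    qed
    have "(\<integral>\<omega>. (\<Sum>r<m. indicator (A \<inter> Rset n r \<inter> Eset n 1) \<omega> * up r + indicator (A \<inter> Rset n r \<inter> Eset n (-1)) \<omega> * um r) \<partial>M)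
       = (\<Sum>r<m. (\<integral>\<omega>. indicator (A \<inter> Rset n r \<inter> Eset n 1) \<omega> * up r + indicator (A \<inter> Rset n r \<inter> Eset n (-1)) \<omega> * um r \<partial>M))"
      by (rule Bochner_Integration.integral_sum) (use ii in auto)
    also have "\<dots> = (\<Sum>r<m. (\<integral>\<omega>. indicator (A \<inter> Rset n r \<inter> Eset n 1) \<omega> * up r \<partial>M) + (\<integral>\<omega>. indicator (A \<inter> Rset n r \<inter> Eset n (-1)) \<omega> * um r \<partial>M))"
      by (intro sum.cong refl Bochner_Integration.integral_add ii)
    finally show ?thesis by (simp only: ei)
  qed
  also have "\<dots> = (\<Sum>r<m. measure M (A \<inter> Rset n r) * (p r * up r + (1 - p r) * um r))"
    by (intro sum.cong refl) (simp add: L_plus[OF A] L_minus[OF A] algebra_simps)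
  also have "\<dots> = 0" by (simp add: pu)
  finally show ?thesis .
qed

lemma MD:
  fixes \<phi> :: "int list \<Rightarrow> real"
  assumes bnd: "AE \<omega> in M. \<bar>\<phi> (hist n \<omega>)\<bar> \<le> K"
  shows "(\<integral>\<omega>. \<phi> (hist n \<omega>) * D n \<omega> \<partial>M) = 0"
proof -
  have fm: "finite_measure M" using prob unfolding prob_space_def by simp
  interpret F: finite_measure_subalgebra M "Fn n"
    by (rule finite_measure_subalgebra.intro[OF fm]) (unfold_locales, rule Fn_subalg)
  have Dint: "integrable M (D n)"
    by (rule intg[where K = B]) (use AE_D in auto)
  have ce: "AE \<omega> in M. real_cond_exp M (Fn n) (D n) \<omega> = 0"
  proof (rule F.real_cond_exp_charact)
    fix A assume A: "A \<in> sets (Fn n)"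
    show "set_lebesgue_integral M A (D n) = set_lebesgue_integral M A (\<lambda>_. 0)"
      unfolding set_lebesgue_integral_def using D_int_A[OF A] by simp
  qed (auto simp: Dint)
  have int: "integrable M (\<lambda>\<omega>. \<phi> (hist n \<omega>) * D n \<omega>)"
  proof (rule intg[where K = "K * B"])
    show "(\<lambda>\<omega>. \<phi> (hist n \<omega>) * D n \<omega>) \<in> borel_measurable M"
      using fun_hist_meas[of \<phi> n] D_meas[of n] by measurable
    show "AE \<omega> in M. \<bar>\<phi> (hist n \<omega>) * D n \<omega>\<bar> \<le> K * B"
      using bnd AE_D
    proof eventually_elim
      case (elim \<omega>)
      then show ?case unfolding abs_mult by (intro mult_mono) auto
    qed
  qed
  have "(\<integral>\<omega>. \<phi> (hist n \<omega>) * D n \<omega> \<partial>M) = (\<integral>\<omega>. \<phi> (hist n \<omega>) * real_cond_exp M (Fn n) (D n) \<omega> \<partial>M)"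
    by (rule F.real_cond_exp_intg(2)[OF int fun_hist_meas_F D_meas, symmetric])
  also have "\<dots> = (\<integral>\<omega>. 0 \<partial>M)"
    by (rule integral_cong_AE) (use ce in \<open>auto simp: fun_hist_meas\<close>)
  finally show ?thesis by simp
qed

end

lemma pow_bound: "\<bar>y::real\<bar> \<le> K \<Longrightarrow> \<bar>y ^ k\<bar> \<le> K ^ k"
  by (simp add: power_abs power_mono)

lemma sqrt_sqrt_pow4: "sqrt (sqrt ((t::real) ^ 4)) = \<bar>t\<bar>"
proof -
  have e: "t ^ 4 = (t ^ 2) ^ 2" by (simp add: eval_nat_numeral)
  have "sqrt (t ^ 4) = t ^ 2" unfolding e real_sqrt_abs by simp
  then show ?thesis by (simp add: real_sqrt_abs)
qed

lemma pow4_exp: "(a+b::real)^4 = a^4 + 4*(a^3*b^1) + 6*(a^2*b^2) + 4*(a^1*b^3) + b^4"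
  by (simp add: eval_nat_numeral algebra_simps)

context mwalk2
begin

lemma int_le_const: "integrable M (f :: 'a \<Rightarrow> real) \<Longrightarrow> AE \<omega> in M. f \<omega> \<le> K \<Longrightarrow> integral\<^sup>L M f \<le> K"
proof -
  assume i: "integrable M f" and a: "AE \<omega> in M. f \<omega> \<le> K"
  have "integral\<^sup>L M f \<le> integral\<^sup>L M (\<lambda>_. K)" by (rule integral_mono_AE[OF i _ a]) simp
  also have "\<dots> = K" by (simp add: P.prob_space)
  finally show ?thesis .
qed

lemma AE_Ypow: "AE \<omega> in M. \<bar>Y n \<omega> ^ k\<bar> \<le> (real n * B) ^ k"
  using AE_Y by eventually_elim (simp add: pow_bound)

lemma AE_Dpow: "AE \<omega> in M. \<bar>D n \<omega> ^ k\<bar> \<le> B ^ k"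
  using AE_D by eventually_elim (simp add: pow_bound)

lemma intYD: "integrable M (\<lambda>\<omega>. Y n \<omega> ^ k * D n \<omega> ^ j)"
proof (rule intg[where K = "(real n * B) ^ k * B ^ j"])
  show "(\<lambda>\<omega>. Y n \<omega> ^ k * D n \<omega> ^ j) \<in> borel_measurable M" by measurable
  show "AE \<omega> in M. \<bar>Y n \<omega> ^ k * D n \<omega> ^ j\<bar> \<le> (real n * B) ^ k * B ^ j"
    using AE_Ypow[of n k] AE_Dpow[of n j]
  proof eventually_elim
    case (elim \<omega>)
    then show ?case unfolding abs_mult by (intro mult_mono) auto
  qed
qed

lemma intY: "integrable M (\<lambda>\<omega>. Y n \<omega> ^ k)"
  using intYD[of n k 0] by simp

lemma intD: "integrable M (\<lambda>\<omega>. D n \<omega> ^ j)"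
  using intYD[of n 0 j] by simp

lemma MD_pow: "(\<integral>\<omega>. Y n \<omega> ^ k * D n \<omega> \<partial>M) = 0"
proof -
  define \<phi> where "\<phi> = (\<lambda>l. (Fh (l ! n) - Fh (l ! 0) - real n * c) ^ k)"
  have e: "\<And>\<omega>. Y n \<omega> ^ k = \<phi> (hist n \<omega>)" unfolding \<phi>_def by (simp add: Y_hist)
  have "AE \<omega> in M. \<bar>\<phi> (hist n \<omega>)\<bar> \<le> (real n * B) ^ k"
    using AE_Ypow[of n k] by eventually_elim (simp only: e)
  then have "(\<integral>\<omega>. \<phi> (hist n \<omega>) * D n \<omega> \<partial>M) = 0" by (rule MD)
  then show ?thesis by (simp only: e)
qed

lemma mom2: "(\<integral>\<omega>. Y n \<omega> ^ 2 \<partial>M) \<le> real n * B ^ 2"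
proof (induction n)
  case 0
  then show ?case by (simp add: Y_0)
next
  case (Suc n)
  have e: "Y (Suc n) \<omega> ^ 2 = Y n \<omega> ^ 2 + 2 * (Y n \<omega> ^ 1 * D n \<omega>) + D n \<omega> ^ 2" for \<omega>
    by (simp add: Y_Suc power2_sum)
  have "(\<integral>\<omega>. Y (Suc n) \<omega> ^ 2 \<partial>M) = (\<integral>\<omega>. Y n \<omega> ^ 2 \<partial>M) + 2 * (\<integral>\<omega>. Y n \<omega> ^ 1 * D n \<omega> \<partial>M) + (\<integral>\<omega>. D n \<omega> ^ 2 \<partial>M)"
    unfolding e using intY[of n 2] intD[of n 2] intYD[of n 1 1] by simp
  also have "(\<integral>\<omega>. Y n \<omega> ^ 1 * D n \<omega> \<partial>M) = 0" by (rule MD_pow)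
  also have "(\<integral>\<omega>. D n \<omega> ^ 2 \<partial>M) \<le> B ^ 2"
    by (rule int_le_const[OF intD]) (use AE_Dpow[of n 2] in auto)
  finally show ?case using Suc.IH by (simp add: algebra_simps)
qed

lemma mom4: "(\<integral>\<omega>. Y n \<omega> ^ 4 \<partial>M) \<le> 10 * B ^ 4 * real n ^ 2"
proof (induction n)
  case 0
  then show ?case by (simp add: Y_0)
next
  case (Suc n)
  have e: "Y (Suc n) \<omega> ^ 4 = Y n \<omega> ^ 4 + 4 * (Y n \<omega> ^ 3 * D n \<omega> ^ 1) + 6 * (Y n \<omega> ^ 2 * D n \<omega> ^ 2)
      + 4 * (Y n \<omega> ^ 1 * D n \<omega> ^ 3) + D n \<omega> ^ 4" for \<omega>
    unfolding Y_Suc by (rule pow4_exp)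
  have "(\<integral>\<omega>. Y (Suc n) \<omega> ^ 4 \<partial>M) = (\<integral>\<omega>. Y n \<omega> ^ 4 \<partial>M) + 4 * (\<integral>\<omega>. Y n \<omega> ^ 3 * D n \<omega> ^ 1 \<partial>M)
      + 6 * (\<integral>\<omega>. Y n \<omega> ^ 2 * D n \<omega> ^ 2 \<partial>M) + 4 * (\<integral>\<omega>. Y n \<omega> ^ 1 * D n \<omega> ^ 3 \<partial>M) + (\<integral>\<omega>. D n \<omega> ^ 4 \<partial>M)"
    unfolding e using intY[of n 4] intD[of n 4] intYD[of n 3 1] intYD[of n 2 2] intYD[of n 1 3] by simp
  also have "(\<integral>\<omega>. Y n \<omega> ^ 3 * D n \<omega> ^ 1 \<partial>M) = 0" using MD_pow[of n 3] by simp
  finally have eq: "(\<integral>\<omega>. Y (Suc n) \<omega> ^ 4 \<partial>M) = (\<integral>\<omega>. Y n \<omega> ^ 4 \<partial>M)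
      + 6 * (\<integral>\<omega>. Y n \<omega> ^ 2 * D n \<omega> ^ 2 \<partial>M) + 4 * (\<integral>\<omega>. Y n \<omega> ^ 1 * D n \<omega> ^ 3 \<partial>M) + (\<integral>\<omega>. D n \<omega> ^ 4 \<partial>M)"
    by simp
  have b: "(\<integral>\<omega>. Y n \<omega> ^ 2 * D n \<omega> ^ 2 \<partial>M) \<le> real n * B ^ 4"
  proof -
    have "(\<integral>\<omega>. Y n \<omega> ^ 2 * D n \<omega> ^ 2 \<partial>M) \<le> (\<integral>\<omega>. B ^ 2 * Y n \<omega> ^ 2 \<partial>M)"
    proof (rule integral_mono_AE[OF intYD])
      show "integrable M (\<lambda>\<omega>. B ^ 2 * Y n \<omega> ^ 2)" using intY[of n 2] by simp
      show "AE \<omega> in M. Y n \<omega> ^ 2 * D n \<omega> ^ 2 \<le> B ^ 2 * Y n \<omega> ^ 2"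
        using AE_Dpow[of n 2]
      proof eventually_elim
        case (elim \<omega>)
        then have "D n \<omega> ^ 2 \<le> B ^ 2" by simp
        then show ?case by (simp add: mult.commute mult_right_mono)
      qed
    qed
    also have "\<dots> = B ^ 2 * (\<integral>\<omega>. Y n \<omega> ^ 2 \<partial>M)" by simp
    also have "\<dots> \<le> B ^ 2 * (real n * B ^ 2)" by (rule mult_left_mono[OF mom2]) simp
    finally show ?thesis by (simp add: algebra_simps power_add[symmetric] eval_nat_numeral)
  qed
  have c: "(\<integral>\<omega>. Y n \<omega> ^ 1 * D n \<omega> ^ 3 \<partial>M) \<le> real n * B ^ 4"
  proof (rule int_le_const[OF intYD])
    show "AE \<omega> in M. Y n \<omega> ^ 1 * D n \<omega> ^ 3 \<le> real n * B ^ 4"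
      using AE_Ypow[of n 1] AE_Dpow[of n 3]
    proof eventually_elim
      case (elim \<omega>)
      have "Y n \<omega> ^ 1 * D n \<omega> ^ 3 \<le> \<bar>Y n \<omega> ^ 1 * D n \<omega> ^ 3\<bar>" by simp
      also have "\<dots> \<le> (real n * B) ^ 1 * B ^ 3" unfolding abs_mult using elim by (intro mult_mono) auto
      also have "\<dots> = real n * B ^ 4" by (simp add: eval_nat_numeral)
      finally show ?case .
    qed
  qed
  have d: "(\<integral>\<omega>. D n \<omega> ^ 4 \<partial>M) \<le> B ^ 4"
    by (rule int_le_const[OF intD]) (use AE_Dpow[of n 4] in auto)
  have B4: "0 \<le> B ^ 4" using B_ge1 by simp
  have nB4: "0 \<le> real n * B ^ 4" using B4 by simp
  have x: "10 * B ^ 4 * real (Suc n) ^ 2 = 10 * B ^ 4 * real n ^ 2 + 20 * (real n * B ^ 4) + 10 * B ^ 4"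
    by (simp add: algebra_simps power2_eq_square)
  show ?case unfolding eq x using Suc.IH b c d B4 nB4 by linarith
qed

end

context mwalk2
begin

lemma Ydiv_bound: "\<bar>Y n \<omega>\<bar> \<le> real n * B \<Longrightarrow> \<bar>Y n \<omega> / real n\<bar> \<le> B"
proof (cases "n = 0")
  case True
  then show ?thesis using B_ge1 by simp
next
  case False
  assume a: "\<bar>Y n \<omega>\<bar> \<le> real n * B"
  have "\<bar>Y n \<omega> / real n\<bar> = \<bar>Y n \<omega>\<bar> / real n" by simp
  also have "\<dots> \<le> B" using a False by (simp add: divide_le_eq mult.commute)
  finally show ?thesis .
qed

lemma intZ: "integrable M (\<lambda>\<omega>. (Y n \<omega> / real n) ^ 4)"
proof (rule intg[where K = "B ^ 4"])
  show "(\<lambda>\<omega>. (Y n \<omega> / real n) ^ 4) \<in> borel_measurable M" by measurable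
  show "AE \<omega> in M. \<bar>(Y n \<omega> / real n) ^ 4\<bar> \<le> B ^ 4"
    using AE_Y by eventually_elim (intro pow_bound Ydiv_bound, auto)
qed

lemma Zint: "(\<integral>\<omega>. (Y n \<omega> / real n) ^ 4 \<partial>M) \<le> 10 * B ^ 4 * inverse (real n ^ 2)"
proof (cases "n = 0")
  case True
  then show ?thesis by simp
next
  case False
  have "(\<integral>\<omega>. (Y n \<omega> / real n) ^ 4 \<partial>M) = (\<integral>\<omega>. Y n \<omega> ^ 4 \<partial>M) / real n ^ 4"
    by (simp add: power_divide)
  also have "\<dots> \<le> 10 * B ^ 4 * real n ^ 2 / real n ^ 4"
    by (rule divide_right_mono[OF mom4]) simp
  also have "\<dots> = 10 * B ^ 4 * inverse (real n ^ 2)"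
    using False by (simp add: field_simps eval_nat_numeral)
  finally show ?thesis .
qed

lemma AE_summable: "AE \<omega> in M. summable (\<lambda>n. (Y n \<omega> / real n) ^ 4)"
proof -
  define b where "b n = 10 * B ^ 4 * inverse (real n ^ 2)" for n
  have b0: "0 \<le> b n" for n unfolding b_def using B_ge1 by simp
  have bs: "summable b" unfolding b_def
    by (intro summable_mult inverse_power_summable) simp
  have meas: "(\<lambda>\<omega>. ennreal ((Y n \<omega> / real n) ^ 4)) \<in> borel_measurable M" for n by measurable
  have "(\<integral>\<^sup>+\<omega>. (\<Sum>n. ennreal ((Y n \<omega> / real n) ^ 4)) \<partial>M) = (\<Sum>n. \<integral>\<^sup>+\<omega>. ennreal ((Y n \<omega> / real n) ^ 4) \<partial>M)"
    by (rule nn_integral_suminf[OF meas])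
  also have "\<dots> = (\<Sum>n. ennreal (\<integral>\<omega>. (Y n \<omega> / real n) ^ 4 \<partial>M))"
    by (intro suminf_cong nn_integral_eq_integral intZ) (simp add: zero_le_even_power)
  also have "\<dots> \<le> (\<Sum>n. ennreal (b n))"
  proof (rule suminf_le[OF _ summableI summableI])
    fix n
    show "ennreal (\<integral>\<omega>. (Y n \<omega> / real n) ^ 4 \<partial>M) \<le> ennreal (b n)"
      unfolding b_def by (rule ennreal_leI[OF Zint])
  qed
  also have "\<dots> = ennreal (\<Sum>n. b n)" by (rule suminf_ennreal2[OF b0 bs])
  finally have le2: "(\<integral>\<^sup>+\<omega>. (\<Sum>n. ennreal ((Y n \<omega> / real n) ^ 4)) \<partial>M) \<le> ennreal (\<Sum>n. b n)" .
  have fin: "(\<integral>\<^sup>+\<omega>. (\<Sum>n. ennreal ((Y n \<omega> / real n) ^ 4)) \<partial>M) \<noteq> \<infinity>"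
  proof
    assume "(\<integral>\<^sup>+\<omega>. (\<Sum>n. ennreal ((Y n \<omega> / real n) ^ 4)) \<partial>M) = \<infinity>"
    with le2 have "\<infinity> \<le> ennreal (\<Sum>n. b n)" by simp
    then show False by (simp add: infinity_ennreal_def top_unique)
  qed
  have "AE \<omega> in M. (\<Sum>n. ennreal ((Y n \<omega> / real n) ^ 4)) \<noteq> \<infinity>"
    by (rule nn_integral_PInf_AE[OF _ fin]) measurable
  then show ?thesis
  proof eventually_elim
    case (elim \<omega>)
    show ?case by (rule summable_suminf_not_top) (use elim in \<open>auto simp: zero_le_even_power\<close>)
  qed
qed

lemma conv: "AE \<omega> in M. (\<lambda>n. real_of_int (S n \<omega>) / real n) \<longlonglongrightarrow> c"
  using AE_summable
proof eventually_elim
  case (elim \<omega>)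
  have z: "(\<lambda>n. (Y n \<omega> / real n) ^ 4) \<longlonglongrightarrow> 0" by (rule summable_LIMSEQ_zero[OF elim])
  have "(\<lambda>n. sqrt (sqrt ((Y n \<omega> / real n) ^ 4))) \<longlonglongrightarrow> sqrt (sqrt 0)"
    by (intro tendsto_real_sqrt z)
  then have "(\<lambda>n. \<bar>Y n \<omega> / real n\<bar>) \<longlonglongrightarrow> 0" by (simp only: sqrt_sqrt_pow4 real_sqrt_zero)
  then have t1: "(\<lambda>n. Y n \<omega> / real n) \<longlonglongrightarrow> 0" by (rule tendsto_rabs_zero_cancel)
  define K where "K = \<bar>Fh (S 0 \<omega>)\<bar> + Hm"
  have t2: "(\<lambda>n. (Fh (S 0 \<omega>) - h (nat (S n \<omega> mod int m))) / real n) \<longlonglongrightarrow> 0"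
  proof (rule Lim_null_comparison)
    show "\<forall>\<^sub>F n in sequentially. norm ((Fh (S 0 \<omega>) - h (nat (S n \<omega> mod int m))) / real n) \<le> K * inverse (real n)"
    proof (intro always_eventually allI)
      fix n
      have "\<bar>Fh (S 0 \<omega>) - h (nat (S n \<omega> mod int m))\<bar> \<le> K"
        unfolding K_def using hx_bound[of "S n \<omega>"] by linarith
      then show "norm ((Fh (S 0 \<omega>) - h (nat (S n \<omega> mod int m))) / real n) \<le> K * inverse (real n)"
        by (simp add: divide_inverse abs_mult mult_right_mono)
    qed
    show "(\<lambda>n. K * inverse (real n)) \<longlonglongrightarrow> 0"
      using tendsto_mult_right_zero[OF lim_inverse_n', of K] by (simp add: divide_inverse)
  qed
  have "(\<lambda>n. Y n \<omega> / real n + (Fh (S 0 \<omega>) - h (nat (S n \<omega> mod int m))) / real n + c) \<longlonglongrightarrow> 0 + 0 + c"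
    by (intro tendsto_add t1 t2 tendsto_const)
  then have t3: "(\<lambda>n. Y n \<omega> / real n + (Fh (S 0 \<omega>) - h (nat (S n \<omega> mod int m))) / real n + c) \<longlonglongrightarrow> c" by simp
  show ?case
  proof (rule Lim_transform_eventually[OF t3])
    show "\<forall>\<^sub>F n in sequentially. Y n \<omega> / real n + (Fh (S 0 \<omega>) - h (nat (S n \<omega> mod int m))) / real n + c = real_of_int (S n \<omega>) / real n"
    proof (rule eventually_sequentiallyI[of 1])
      fix n :: nat assume n: "1 \<le> n"
      then show "Y n \<omega> / real n + (Fh (S 0 \<omega>) - h (nat (S n \<omega> mod int m))) / real n + c = real_of_int (S n \<omega>) / real n"
        unfolding Y_def Fh_def by (simp add: field_simps)
    qed
  qed
qed

end

theorem theorem5p1: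
  fixes M :: "'a measure" and m :: nat and p :: "nat \<Rightarrow> real" and S :: "nat \<Rightarrow> 'a \<Rightarrow> int"
  assumes "m \<ge> 1"
    and "\<And>j. j < m \<Longrightarrow> 0 < p j \<and> p j < 1"
    and "mod_walk M m p S"
  shows "AE \<omega> in M. (\<lambda>n. real_of_int (S n \<omega>) / real n) \<longlonglongrightarrow>
           (1 / (\<Sum>i<m. gamma m p i)) * (\<Sum>i<m. gamma m p i * (p i - (1 - p i)))"
proof -
  interpret W: walkpar m p by unfold_locales (use assms in auto)
  obtain h where h: "\<forall>a<m. p a * h ((a+1) mod m) + (1 - p a) * h ((a+m-1) mod m) = h a - (p a - (1 - p a))
      + (1 / (\<Sum>i<m. gamma m p i)) * (\<Sum>i<m. gamma m p i * (p i - (1 - p i)))"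
    using W.solve_poisson[of "\<lambda>i. p i - (1 - p i)"] by auto
  interpret W2: mwalk2 m p M S h "(1 / (\<Sum>i<m. gamma m p i)) * (\<Sum>i<m. gamma m p i * (p i - (1 - p i)))"
    by unfold_locales (use assms h in auto)
  show ?thesis by (rule W2.conv)
qed

end
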